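(* A cograph $G$ has outcome $\mathcal D$ in the Maker-Breaker domination game if and only if $G$ admits a pairing dominating set.
   Context: Cographs are the graphs that can be built from single vertices by repeatedly taking disjoint unions and joins (equivalently, $P_4$-free graphs). Given a graph $G=(V,E)$, a pairing dominating set is a set of pairs of vertices $\{(u_1,v_1),\ldots,(u_k,v_k)\}$, where all $2k$ vertices are distinct, such that $V=\bigcup_{i=1}^k \big(N[u_i]\cap N[v_i]\big)$, with $N[x]$ the closed neighborhood of $x$. The Maker-Breaker domination game on $G$: Dominator and Staller alternately choose a not-yet-chosen vertex (no passing), starting with all vertices unchosen; when all vertices are chosen, Dominator wins if his vertices form a dominating set of $G$, otherwise Staller wins. Outcome $\mathcal D$ means Dominator has a winning strategy both as first and as second player. *)

theory Defs
  imports Main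
begin

definition graph :: "'a set \<Rightarrow> ('a \<Rightarrow> 'a \<Rightarrow> bool) \<Rightarrow> bool" where
  "graph V E \<longleftrightarrow> finite V \<and> (\<forall>x y. E x y \<longrightarrow> E y x) \<and> (\<forall>x. \<not> E x x)
     \<and> (\<forall>x y. E x y \<longrightarrow> x \<in> V \<and> y \<in> V)"

definition cnbh :: "'a set \<Rightarrow> ('a \<Rightarrow> 'a \<Rightarrow> bool) \<Rightarrow> 'a \<Rightarrow> 'a set" where
  "cnbh V E x = insert x {y \<in> V. E x y}"

definition dominating :: "'a set \<Rightarrow> ('a \<Rightarrow> 'a \<Rightarrow> bool) \<Rightarrow> 'a set \<Rightarrow> bool" where
  "dominating V E D \<longleftrightarrow> D \<subseteq> V \<and> (\<forall>x\<in>V. x \<in> D \<or> (\<exists>y\<in>D. E x y))"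

inductive cograph_on :: "('a \<Rightarrow> 'a \<Rightarrow> bool) \<Rightarrow> 'a set \<Rightarrow> bool" for E where
  single: "cograph_on E {v}"
| union: "\<lbrakk>cograph_on E A; cograph_on E B; A \<inter> B = {};
           \<forall>a\<in>A. \<forall>b\<in>B. \<not> E a b\<rbrakk> \<Longrightarrow> cograph_on E (A \<union> B)"
| join: "\<lbrakk>cograph_on E A; cograph_on E B; A \<inter> B = {};
           \<forall>a\<in>A. \<forall>b\<in>B. E a b\<rbrakk> \<Longrightarrow> cograph_on E (A \<union> B)"

definition cograph :: "'a set \<Rightarrow> ('a \<Rightarrow> 'a \<Rightarrow> bool) \<Rightarrow> bool" where
  "cograph V E \<longleftrightarrow> graph V E \<and> cograph_on E V"

definition pairing_dominating_set ::
  "'a set \<Rightarrow> ('a \<Rightarrow> 'a \<Rightarrow> bool) \<Rightarrow> ('a \<times> 'a) set \<Rightarrow> bool" where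
  "pairing_dominating_set V E P \<longleftrightarrow>
     finite P \<and>
     (\<forall>(u,v)\<in>P. u \<in> V \<and> v \<in> V \<and> u \<noteq> v) \<and>
     (\<forall>p\<in>P. \<forall>q\<in>P. p \<noteq> q \<longrightarrow> {fst p, snd p} \<inter> {fst q, snd q} = {}) \<and>
     V = (\<Union>(u,v)\<in>P. cnbh V E u \<inter> cnbh V E v)"

text \<open>Position: Dominator's chosen vertices D,
Staller's chosen vertices S, and whose turn it is (True = Dominator).
dom_wins V E D S t holds iff Dominator has a winning strategy from that position.\<close>
inductive dom_wins :: "'a set \<Rightarrow> ('a \<Rightarrow> 'a \<Rightarrow> bool) \<Rightarrow> 'a set \<Rightarrow> 'a set \<Rightarrow> bool \<Rightarrow> bool"
  for V E where
  finished: "\<lbrakk>D \<union> S = V; dominating V E D\<rbrakk> \<Longrightarrow> dom_wins V E D S t"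
| dom_move: "\<lbrakk>v \<in> V - (D \<union> S); dom_wins V E (insert v D) S False\<rbrakk>
             \<Longrightarrow> dom_wins V E D S True"
| stal_move: "\<lbrakk>V - (D \<union> S) \<noteq> {};
               \<forall>v \<in> V - (D \<union> S). dom_wins V E D (insert v S) True\<rbrakk>
             \<Longrightarrow> dom_wins V E D S False"

definition outcome_D :: "'a set \<Rightarrow> ('a \<Rightarrow> 'a \<Rightarrow> bool) \<Rightarrow> bool" where
  "outcome_D V E \<longleftrightarrow> dom_wins V E {} {} True \<and> dom_wins V E {} {} False"

end

theory Submission
  imports Defs
begin


inductive mwins :: "'a set \<Rightarrow> 'a set set \<Rightarrow> bool \<Rightarrow> bool" where
  mw_win: "{} \<in> F \<Longrightarrow> mwins B F m"
| mw_mk: "v \<in> B \<Longrightarrow> mwins (B - {v}) ((\<lambda>e. e - {v}) ` F) False \<Longrightarrow> mwins B F True"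
| mw_br: "B \<noteq> {} \<Longrightarrow> \<forall>v\<in>B. mwins (B - {v}) {e\<in>F. v \<notin> e} True \<Longrightarrow> mwins B F False"

lemma mw_mono:
  assumes "mwins B F m" "\<forall>e\<in>F. \<exists>e'\<in>F'. e' \<subseteq> e"
  shows "mwins B F' m"
  using assms
proof (induction arbitrary: F' rule: mwins.induct)
  case (mw_win F B m)
  then obtain e' where "e' \<in> F'" "e' \<subseteq> {}" by blast
  then show ?case by (simp add: mwins.mw_win)
next
  case (mw_mk v B F)
  have "\<forall>e\<in>(\<lambda>e. e - {v}) ` F. \<exists>e'\<in>(\<lambda>e. e - {v}) ` F'. e' \<subseteq> e"
  proof
    fix e assume "e \<in> (\<lambda>e. e - {v}) ` F"
    then obtain e0 where "e0 \<in> F" "e = e0 - {v}" by blast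
    then obtain e' where "e' \<in> F'" "e' \<subseteq> e0" using mw_mk.prems by blast
    then show "\<exists>e'\<in>(\<lambda>e. e - {v}) ` F'. e' \<subseteq> e" using \<open>e = e0 - {v}\<close> by blast
  qed
  then have "mwins (B - {v}) ((\<lambda>e. e - {v}) ` F') False"
    by (rule mw_mk.IH)
  then show ?case by (rule mwins.mw_mk[OF mw_mk.hyps(1)])
next
  case (mw_br B F)
  show ?case
  proof (rule mwins.mw_br)
    show "B \<noteq> {}" by fact
    show "\<forall>v\<in>B. mwins (B - {v}) {e \<in> F'. v \<notin> e} True"
    proof
      fix v assume "v \<in> B"
      then have "\<forall>F''. (\<forall>e\<in>{e \<in> F. v \<notin> e}. \<exists>e'\<in>F''. e' \<subseteq> e) \<longrightarrow> mwins (B - {v}) F'' True"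
        using mw_br.IH by blast
      moreover have "\<forall>e\<in>{e \<in> F. v \<notin> e}. \<exists>e'\<in>{e \<in> F'. v \<notin> e}. e' \<subseteq> e"
        using mw_br.prems by blast
      ultimately show "mwins (B - {v}) {e \<in> F'. v \<notin> e} True" by blast
    qed
  qed
qed

lemma mw_empty: "mwins {} F m \<Longrightarrow> {} \<in> F"
  by (erule mwins.cases) auto

lemma mw_aux:
  "finite B \<Longrightarrow> card B = n \<Longrightarrow>
   (\<forall>F m v. mwins B F m \<longrightarrow> v \<in> B \<longrightarrow> mwins (B - {v}) ((\<lambda>e. e - {v}) ` F) m) \<and>
   (\<forall>F. mwins B F False \<longrightarrow> mwins B F True)"
proof (induction n arbitrary: B rule: less_induct)
  case (less n)
  have IH1: "mwins (B' - {v}) ((\<lambda>e. e - {v}) ` F) m"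
    if "B' \<subset> B" "mwins B' F m" "v \<in> B'" for B' F m v
  proof -
    have f: "finite B'" using that(1) less.prems(1) by (meson finite_subset psubset_imp_subset)
    have c: "card B' < n" using that(1) less.prems psubset_card_mono by metis
    show ?thesis using less.IH[OF c f refl] that by blast
  qed
  have IH2: "mwins B' F True" if "B' \<subset> B" "mwins B' F False" for B' F
  proof -
    have f: "finite B'" using that(1) less.prems(1) by (meson finite_subset psubset_imp_subset)
    have c: "card B' < n" using that(1) less.prems psubset_card_mono by metis
    show ?thesis using less.IH[OF c f refl] that by blast
  qed
  have P1: "mwins B F m \<Longrightarrow> v \<in> B \<Longrightarrow> mwins (B - {v}) ((\<lambda>e. e - {v}) ` F) m" for F m v
  proof (erule mwins.cases)
    fix F' m' assume "F = F'" "m = m'" "{} \<in> F'"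
    then show ?thesis by (intro mw_win) force
  next
    fix u B' F' assume h: "B = B'" "F = F'" "m = True" "u \<in> B'"
       "mwins (B' - {u}) ((\<lambda>e. e - {u}) ` F') False" and v: "v \<in> B"
    show ?thesis
    proof (cases "u = v")
      case True
      then show ?thesis using h IH2[of "B - {v}"] v by blast
    next
      case False
      have "mwins (B - {u} - {v}) ((\<lambda>e. e - {v}) ` (\<lambda>e. e - {u}) ` F) False"
        using IH1[of "B - {u}"] h v False by blast
      moreover have "B - {u} - {v} = B - {v} - {u}" by blast
      moreover have "(\<lambda>e. e - {v}) ` (\<lambda>e. e - {u}) ` F = (\<lambda>e. e - {u}) ` (\<lambda>e. e - {v}) ` F"
        by (auto simp: image_image Diff_insert2[symmetric] insert_commute)
      ultimately have "mwins (B - {v} - {u}) ((\<lambda>e. e - {u}) ` (\<lambda>e. e - {v}) ` F) False" by simp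
      moreover have "u \<in> B - {v}" using h False by blast
      ultimately show ?thesis unfolding h(3) by (intro mwins.mw_mk[of u]) auto
    qed
  next
    fix B' F' assume h: "B = B'" "F = F'" "m = False" "B' \<noteq> {}"
      "\<forall>w\<in>B'. mwins (B' - {w}) {e \<in> F'. w \<notin> e} True" and v: "v \<in> B"
    show ?thesis
    proof (cases "B - {v} = {}")
      case True
      have "mwins (B - {v}) {e \<in> F. v \<notin> e} True" using h v by blast
      then have "{} \<in> F" using True mw_empty by fastforce
      then show ?thesis by (intro mw_win) force
    next
      case False
      show ?thesis unfolding h(3)
      proof (rule mw_br)
        show "B - {v} \<noteq> {}" by fact
        show "\<forall>w\<in>B - {v}. mwins (B - {v} - {w}) {e \<in> (\<lambda>e. e - {v}) ` F. w \<notin> e} True"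
        proof
          fix w assume w: "w \<in> B - {v}"
          have "mwins (B - {w} - {v}) ((\<lambda>e. e - {v}) ` {e \<in> F. w \<notin> e}) True"
            using IH1[of "B - {w}"] h v w by blast
          moreover have "B - {w} - {v} = B - {v} - {w}" by blast
          moreover have "(\<lambda>e. e - {v}) ` {e \<in> F. w \<notin> e} = {e \<in> (\<lambda>e. e - {v}) ` F. w \<notin> e}"
            using w by auto
          ultimately show "mwins (B - {v} - {w}) {e \<in> (\<lambda>e. e - {v}) ` F. w \<notin> e} True" by simp
        qed
      qed
    qed
  qed
  have P2: "mwins B F False \<Longrightarrow> mwins B F True" for F
  proof (erule mwins.cases)
    fix F' m' assume "F = F'" "{} \<in> F'" then show ?thesis by (simp add: mw_win)
  next
    fix v B' F' assume "False = True" then show ?thesis by simp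
  next
    fix B' F' assume h: "B = B'" "F = F'" "B' \<noteq> {}"
      "\<forall>w\<in>B'. mwins (B' - {w}) {e \<in> F'. w \<notin> e} True"
    obtain v where v: "v \<in> B" using h(1,3) by blast
    have "mwins B F False" using h(4) h(3) unfolding h(1,2) by (rule mwins.mw_br[rotated])
    then have "mwins (B - {v}) ((\<lambda>e. e - {v}) ` F) False" using P1 v by blast
    then show ?thesis by (rule mw_mk[OF v])
  qed
  show ?case using P1 P2 by blast
qed

lemma mw_extra: "finite B \<Longrightarrow> mwins B F m \<Longrightarrow> v \<in> B \<Longrightarrow> mwins (B - {v}) ((\<lambda>e. e - {v}) ` F) m"
  using mw_aux by blast

lemma mw_turn: "finite B \<Longrightarrow> mwins B F False \<Longrightarrow> mwins B F True"
  using mw_aux by blast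



lemma mw_sub_aux:
  "finite B1 \<Longrightarrow> finite B2 \<Longrightarrow> card B1 + card B2 = n \<Longrightarrow> B1 \<inter> B2 = {} \<Longrightarrow>
   \<forall>e\<in>F. e \<inter> B2 = {} \<Longrightarrow> mwins B1 F m \<Longrightarrow> mwins (B1 \<union> B2) F m"
proof (induction n arbitrary: B1 B2 F m rule: less_induct)
  case (less n)
  note fin = less.prems(1,2) and dj = less.prems(4) and ed = less.prems(5)
  from less.prems(6) show ?case
  proof (cases rule: mwins.cases)
    case mw_win
    then show ?thesis by (simp add: mwins.mw_win)
  next
    case (mw_mk v)
    have "mwins ((B1 - {v}) \<union> B2) ((\<lambda>e. e - {v}) ` F) False"
    proof (rule less.IH)
      show "card (B1 - {v}) + card B2 < n" using mw_mk(2) fin less.prems(3)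
        by (metis add_less_mono1 card_Diff1_less)
    qed (use fin dj ed mw_mk in auto)
    moreover have "(B1 - {v}) \<union> B2 = (B1 \<union> B2) - {v}" using mw_mk(2) dj by blast
    ultimately have "mwins ((B1 \<union> B2) - {v}) ((\<lambda>e. e - {v}) ` F) False" by simp
    moreover have "v \<in> B1 \<union> B2" using mw_mk(2) by blast
    ultimately show ?thesis unfolding mw_mk(1) by (rule mwins.mw_mk[rotated])
  next
    case mw_br
    show ?thesis unfolding mw_br(1)
    proof (rule mwins.mw_br)
      show "B1 \<union> B2 \<noteq> {}" using mw_br by blast
      show "\<forall>w\<in>B1 \<union> B2. mwins (B1 \<union> B2 - {w}) {e \<in> F. w \<notin> e} True"
      proof
        fix w assume w: "w \<in> B1 \<union> B2"
        show "mwins (B1 \<union> B2 - {w}) {e \<in> F. w \<notin> e} True"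
        proof (cases "w \<in> B1")
          case True
          have "mwins ((B1 - {w}) \<union> B2) {e \<in> F. w \<notin> e} True"
          proof (rule less.IH)
            show "card (B1 - {w}) + card B2 < n" using True fin less.prems(3)
              by (metis add_less_mono1 card_Diff1_less)
            show "mwins (B1 - {w}) {e \<in> F. w \<notin> e} True" using mw_br(3) True by blast
          qed (use fin dj ed in auto)
          moreover have "(B1 - {w}) \<union> B2 = (B1 \<union> B2) - {w}" using True dj by blast
          ultimately show ?thesis by simp
        next
          case False
          then have w2: "w \<in> B2" using w by blast
          have eq: "{e \<in> F. w \<notin> e} = F" using ed w2 by blast
          have "mwins B1 F False" using less.prems(6) mw_br(1) by simp
          then have t: "mwins B1 F True" using fin mw_turn by blast
          have "mwins (B1 \<union> (B2 - {w})) F True"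
          proof (rule less.IH[OF _ fin(1) _ refl _ _ t])
            show "card B1 + card (B2 - {w}) < n" using w2 fin less.prems(3)
              by (metis add_less_mono card_Diff1_less le_refl nat_add_left_cancel_less)
          qed (use fin dj ed in auto)
          moreover have "B1 \<union> (B2 - {w}) = (B1 \<union> B2) - {w}" using False by blast
          ultimately show ?thesis using eq by simp
        qed
      qed
    qed
  qed
qed

lemma mw_sub:
  "finite B1 \<Longrightarrow> finite B2 \<Longrightarrow> B1 \<inter> B2 = {} \<Longrightarrow>
   \<forall>e\<in>F. e \<inter> B2 = {} \<Longrightarrow> mwins B1 F m \<Longrightarrow> mwins (B1 \<union> B2) F m"
  by (rule mw_sub_aux[OF _ _ refl])


definition pinv :: "'a set \<Rightarrow> 'a set set \<Rightarrow> 'a set set \<Rightarrow> bool" where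
  "pinv B F Q \<longleftrightarrow> (\<forall>p\<in>Q. card p = 2) \<and> (\<forall>p\<in>Q. p \<subseteq> B) \<and>
     (\<forall>p\<in>Q. \<forall>q\<in>Q. p \<noteq> q \<longrightarrow> p \<inter> q = {}) \<and> (\<forall>e\<in>F. \<exists>p\<in>Q. p \<subseteq> e)"
lemma pinv_card: "pinv B F Q \<Longrightarrow> p \<in> Q \<Longrightarrow> card p = 2"
  unfolding pinv_def by simp
lemma pinv_pair: "pinv B F Q \<Longrightarrow> p \<in> Q \<Longrightarrow> \<exists>a b. p = {a,b} \<and> a \<noteq> b"
  using pinv_card card_2_iff by metis
lemma pinv_sub: "pinv B F Q \<Longrightarrow> p \<in> Q \<Longrightarrow> p \<subseteq> B"
  unfolding pinv_def by simp
lemma pinv_dj: "pinv B F Q \<Longrightarrow> p \<in> Q \<Longrightarrow> q \<in> Q \<Longrightarrow> p \<noteq> q \<Longrightarrow> p \<inter> q = {}"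
  unfolding pinv_def by simp
lemma pinv_cov: "pinv B F Q \<Longrightarrow> e \<in> F \<Longrightarrow> \<exists>p\<in>Q. p \<subseteq> e"
  unfolding pinv_def by simp
lemma pinvI:
  assumes "\<And>p. p \<in> Q \<Longrightarrow> card p = 2" "\<And>p. p \<in> Q \<Longrightarrow> p \<subseteq> B"
    "\<And>p q. p \<in> Q \<Longrightarrow> q \<in> Q \<Longrightarrow> p \<noteq> q \<Longrightarrow> p \<inter> q = {}"
    "\<And>e. e \<in> F \<Longrightarrow> \<exists>p\<in>Q. p \<subseteq> e"
  shows "pinv B F Q"
  unfolding pinv_def using assms by simp
lemma pinv_step:
  assumes "pinv B F Q" "w \<in> B"
  shows "pinv (B - {w}) {e\<in>F. w \<notin> e} {p\<in>Q. w \<notin> p}"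
proof (rule pinvI)
  show "card p = 2" if "p \<in> {p \<in> Q. w \<notin> p}" for p using pinv_card[OF assms(1)] that by blast
  show "p \<subseteq> B - {w}" if "p \<in> {p \<in> Q. w \<notin> p}" for p using pinv_sub[OF assms(1)] that by blast
  show "p \<inter> q = {}" if "p \<in> {p \<in> Q. w \<notin> p}" "q \<in> {p \<in> Q. w \<notin> p}" "p \<noteq> q" for p q
    using pinv_dj[OF assms(1)] that by blast
  show "\<exists>p\<in>{p \<in> Q. w \<notin> p}. p \<subseteq> e" if "e \<in> {e \<in> F. w \<notin> e}" for e
    using pinv_cov[OF assms(1)] that by blast
qed

lemma pinv_noempty: "pinv B F Q \<Longrightarrow> {} \<notin> F"
  using pinv_cov pinv_card by fastforce

lemma pairing_aux:
  "finite B \<Longrightarrow> card B = n \<Longrightarrow> pinv B F Q \<Longrightarrow> \<not> mwins B F m"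
proof (induction n arbitrary: B F Q m rule: less_induct)
  case (less n)
  note inv = less.prems(3)
  have IH: "\<not> mwins B' F' m'" if "B' \<subset> B" "pinv B' F' Q'" for B' F' Q' m'
  proof -
    have f: "finite B'" using that(1) less.prems(1) by (meson finite_subset psubset_imp_subset)
    have c: "card B' < n" using that(1) less.prems psubset_card_mono by metis
    show ?thesis using less.IH[OF c f refl that(2)] .
  qed
  have brstep: "\<not> mwins B' F' False" if "B' \<subset> B" "pinv B' F' Q'" for B' F' Q'
  proof
    assume "mwins B' F' False"
    then show False
    proof (cases rule: mwins.cases)
      case mw_win then show False using pinv_noempty that(2) by blast
    next
      case mw_br
      then obtain w where w: "w \<in> B'" by blast
      have "mwins (B' - {w}) {e \<in> F'. w \<notin> e} True" using mw_br(2) w by blast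
      moreover have "pinv (B' - {w}) {e\<in>F'. w \<notin> e} {p\<in>Q'. w \<notin> p}"
        using pinv_step[OF that(2) w] .
      moreover have "B' - {w} \<subset> B" using that(1) w by blast
      ultimately show False using IH by blast
    qed simp
  qed
  show ?case
  proof
    assume "mwins B F m"
    then show False
    proof (cases rule: mwins.cases)
      case mw_win then show False using pinv_noempty inv by blast
    next
      case (mw_mk v)
      note vB = mw_mk(2)
      show False
      proof (cases "\<exists>p\<in>Q. v \<in> p")
        case True
        then obtain p0 where p0: "p0 \<in> Q" "v \<in> p0" by blast
        obtain a b where ab: "p0 = {a,b}" "a \<noteq> b" using pinv_pair[OF inv p0(1)] by blast
        obtain w where pw: "p0 = {v, w}" "w \<noteq> v" using ab p0(2) by (metis insert_commute insertE singletonD)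
        have wB: "w \<in> B - {v}" using pinv_sub[OF inv p0(1)] pw by blast
        from mw_mk(3) show False
        proof (cases rule: mwins.cases)
          case mw_win
          then obtain e where e: "e \<in> F" "e - {v} = {}" by blast
          then obtain p where p: "p \<in> Q" "p \<subseteq> e" using pinv_cov[OF inv] by blast
          obtain a' b' where "p = {a',b'}" "a' \<noteq> b'" using pinv_pair[OF inv p(1)] by blast
          then show False using p e by blast
        next
          case mw_br
          have m: "mwins (B - {v} - {w}) {e \<in> (\<lambda>e. e - {v}) ` F. w \<notin> e} True"
            using mw_br(2) wB by blast
          have "pinv (B - {v} - {w}) {e \<in> (\<lambda>e. e - {v}) ` F. w \<notin> e} (Q - {p0})"
          proof (rule pinvI)
            show "card p = 2" if "p \<in> Q - {p0}" for p
              using pinv_card[OF inv] that by blast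
            show "p \<subseteq> B - {v} - {w}" if "p \<in> Q - {p0}" for p
              using pinv_sub[OF inv] pinv_dj[OF inv _ p0(1)] that pw by blast
            show "p \<inter> q = {}" if "p \<in> Q - {p0}" "q \<in> Q - {p0}" "p \<noteq> q" for p q
              using pinv_dj[OF inv] that by blast
            show "\<exists>p\<in>Q - {p0}. p \<subseteq> e" if he: "e \<in> {e \<in> (\<lambda>e. e - {v}) ` F. w \<notin> e}" for e
            proof -
              obtain e0 where e0: "e0 \<in> F" "e = e0 - {v}" "w \<notin> e" using he by blast
              then have "w \<notin> e0" using pw by blast
              obtain p where p: "p \<in> Q" "p \<subseteq> e0" using pinv_cov[OF inv e0(1)] by blast
              have "p \<noteq> p0" using p pw \<open>w \<notin> e0\<close> by blast
              then have "p \<inter> p0 = {}" using pinv_dj[OF inv p(1) p0(1)] by blast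
              then show "\<exists>p\<in>Q - {p0}. p \<subseteq> e" using p pw e0 \<open>p \<noteq> p0\<close> by blast
            qed
          qed
          moreover have "B - {v} - {w} \<subset> B" using vB by blast
          ultimately show False using IH m by blast
        qed simp
      next
        case False
        have "pinv (B - {v}) ((\<lambda>e. e - {v}) ` F) Q"
        proof (rule pinvI)
          show "card p = 2" if "p \<in> Q" for p
            using pinv_card[OF inv] that by blast
          show "p \<subseteq> B - {v}" if "p \<in> Q" for p
            using pinv_sub[OF inv] that False by blast
          show "p \<inter> q = {}" if "p \<in> Q" "q \<in> Q" "p \<noteq> q" for p q
            using pinv_dj[OF inv] that by blast
          show "\<exists>p\<in>Q. p \<subseteq> e" if he: "e \<in> (\<lambda>e. e - {v}) ` F" for e
          proof -
            obtain e0 where e0: "e0 \<in> F" "e = e0 - {v}" using he by blast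
            obtain p where p: "p \<in> Q" "p \<subseteq> e0" using pinv_cov[OF inv e0(1)] by blast
            then show ?thesis using False e0 by blast
          qed
        qed
        moreover have "B - {v} \<subset> B" using vB by blast
        ultimately show False using brstep mw_mk(3) by blast
      qed
    next
      case mw_br
      obtain w where w: "w \<in> B" using mw_br by blast
      have "mwins (B - {w}) {e \<in> F. w \<notin> e} True" using mw_br(3) w by blast
      moreover have "pinv (B - {w}) {e\<in>F. w \<notin> e} {p\<in>Q. w \<notin> p}"
        using pinv_step[OF inv w] .
      moreover have "B - {w} \<subset> B" using w by blast
      ultimately show False using IH by blast
    qed
  qed
qed

lemma pairing_breaker: "finite B \<Longrightarrow> pinv B F Q \<Longrightarrow> \<not> mwins B F m"
  by (rule pairing_aux[OF _ refl])


definition FF :: "'a set \<Rightarrow> ('a \<Rightarrow> 'a \<Rightarrow> bool) \<Rightarrow> 'a set \<Rightarrow> 'a set \<Rightarrow> 'a set set" where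
  "FF V E D S = (\<lambda>x. cnbh V E x - S) ` {x\<in>V. cnbh V E x \<inter> D = {}}"

lemma FF_R1: "v \<notin> S \<Longrightarrow> {e\<in>FF V E D S. v \<notin> e} = FF V E (insert v D) S"
  unfolding FF_def by auto

lemma FF_R2: "(\<lambda>e. e - {v}) ` FF V E D S = FF V E D (insert v S)"
proof -
  have "\<And>A. A - S - {v} = A - insert v S" by blast
  then show ?thesis unfolding FF_def image_image by simp
qed

lemma FF_empty_D: "{} \<in> FF V E D S \<Longrightarrow> v \<notin> S \<Longrightarrow> {} \<in> FF V E (insert v D) S"
  unfolding FF_def by auto

lemma FF_empty_S: "{} \<in> FF V E D S \<Longrightarrow> {} \<in> FF V E D (insert v S)"
  unfolding FF_def by auto

lemma trans_A:
  assumes "dom_wins V E D S t" "graph V E"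
  shows "\<not> mwins (V - (D \<union> S)) (FF V E D S) (\<not> t)"
  using assms
proof (induction rule: dom_wins.induct)
  case (finished D S t)
  show ?case
  proof
    assume "mwins (V - (D \<union> S)) (FF V E D S) (\<not> t)"
    then have "{} \<in> FF V E D S" using finished(1) mw_empty by fastforce
    then obtain x where x: "x \<in> V" "cnbh V E x \<inter> D = {}" unfolding FF_def by blast
    have "x \<in> cnbh V E x" unfolding cnbh_def by simp
    moreover have "\<And>y. E x y \<Longrightarrow> y \<in> cnbh V E x" using assms(2) unfolding cnbh_def graph_def by blast
    ultimately show False using finished(2) x unfolding dominating_def by blast
  qed
next
  case (dom_move v D S)
  have IH: "\<not> mwins (V - (insert v D \<union> S)) (FF V E (insert v D) S) True"
    using dom_move.IH assms(2) by simp
  have vS: "v \<notin> S" using dom_move(1) by blast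
  show ?case
  proof
    assume "mwins (V - (D \<union> S)) (FF V E D S) (\<not> True)"
    then show False
    proof (cases rule: mwins.cases)
      case mw_win
      then show False using IH FF_empty_D[OF _ vS] mw_win by (metis mwins.mw_win)
    next
      case mw_br
      have "mwins (V - (D \<union> S) - {v}) {e \<in> FF V E D S. v \<notin> e} True" using mw_br(3) dom_move(1) by blast
      moreover have "V - (D \<union> S) - {v} = V - (insert v D \<union> S)" by blast
      ultimately show False using IH FF_R1[OF vS] by simp
    qed simp
  qed
next
  case (stal_move D S)
  show ?case
  proof
    assume "mwins (V - (D \<union> S)) (FF V E D S) (\<not> False)"
    then show False
    proof (cases rule: mwins.cases)
      case mw_win
      obtain v where v: "v \<in> V - (D \<union> S)" using stal_move(1) by blast
      have "\<not> mwins (V - (D \<union> insert v S)) (FF V E D (insert v S)) False"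
        using stal_move.IH v assms(2) by simp
      then show False using FF_empty_S[OF mw_win(1)] by (metis mwins.mw_win)
    next
      case (mw_mk v)
      have "\<not> mwins (V - (D \<union> insert v S)) (FF V E D (insert v S)) False"
        using stal_move.IH mw_mk(2) assms(2) by simp
      moreover have "V - (D \<union> S) - {v} = V - (D \<union> insert v S)" by blast
      ultimately show False using mw_mk(3) FF_R2 by metis
    qed simp
  qed
qed

lemma trans_B_aux:
  "finite V \<Longrightarrow> graph V E \<Longrightarrow> card (V - (D \<union> S)) = n \<Longrightarrow> D \<subseteq> V \<Longrightarrow> S \<subseteq> V \<Longrightarrow>
   \<not> dom_wins V E D S t \<Longrightarrow> mwins (V - (D \<union> S)) (FF V E D S) (\<not> t)"
proof (induction n arbitrary: D S t rule: less_induct)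
  case (less n)
  note fin = less.prems(1) and gr = less.prems(2)
  show ?case
  proof (cases "V - (D \<union> S) = {}")
    case True
    then have DS: "D \<union> S = V" using less.prems(4,5) by blast
    then have "\<not> dominating V E D" using less.prems(6) dom_wins.finished by blast
    then obtain x where x: "x \<in> V" "x \<notin> D" "\<And>y. y \<in> D \<Longrightarrow> \<not> E x y"
      using less.prems(4) unfolding dominating_def by blast
    have c: "cnbh V E x \<inter> D = {}" using x unfolding cnbh_def by blast
    have "cnbh V E x \<subseteq> V" using x unfolding cnbh_def by blast
    then have "cnbh V E x - S = {}" using c DS by blast
    then have "{} \<in> FF V E D S" unfolding FF_def using x c by blast
    then show ?thesis by (rule mw_win)
  next
    case False
    show ?thesis
    proof (cases t)
      case True
      have "mwins (V - (D \<union> S)) (FF V E D S) False"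
      proof (rule mw_br)
        show "V - (D \<union> S) \<noteq> {}" by fact
        show "\<forall>v\<in>V - (D \<union> S). mwins (V - (D \<union> S) - {v}) {e \<in> FF V E D S. v \<notin> e} True"
        proof
          fix v assume v: "v \<in> V - (D \<union> S)"
          have nd: "\<not> dom_wins V E (insert v D) S False"
          proof
            assume h: "dom_wins V E (insert v D) S False"
            have "dom_wins V E D S True" by (rule dom_wins.dom_move[OF v h])
            then show False using less.prems(6) True by simp
          qed
          have eqB: "V - (D \<union> S) - {v} = V - (insert v D \<union> S)" by blast
          have "card (V - (D \<union> S) - {v}) < card (V - (D \<union> S))"
            by (rule card_Diff1_less) (use fin v in auto)
          then have c: "card (V - (insert v D \<union> S)) < n" using eqB less.prems(3) by simp
          have s1: "insert v D \<subseteq> V" using v less.prems(4) by blast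
          have "mwins (V - (insert v D \<union> S)) (FF V E (insert v D) S) (\<not> False)"
            by (rule less.IH[OF c fin gr refl s1 less.prems(5) nd])
          then show "mwins (V - (D \<union> S) - {v}) {e \<in> FF V E D S. v \<notin> e} True"
            using eqB FF_R1[of v S V E D] v by simp
        qed
      qed
      then show ?thesis using True by simp
    next
      case f: False
      have "\<not> (\<forall>v\<in>V - (D \<union> S). dom_wins V E D (insert v S) True)"
      proof
        assume h: "\<forall>v\<in>V - (D \<union> S). dom_wins V E D (insert v S) True"
        have "dom_wins V E D S False" by (rule dom_wins.stal_move[OF False h])
        then show False using less.prems(6) f by simp
      qed
      then obtain v where v: "v \<in> V - (D \<union> S)" and nd: "\<not> dom_wins V E D (insert v S) True" by blast
      have eqB: "V - (D \<union> S) - {v} = V - (D \<union> insert v S)" by blast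
      have "card (V - (D \<union> S) - {v}) < card (V - (D \<union> S))"
        by (rule card_Diff1_less) (use fin v in auto)
      then have c: "card (V - (D \<union> insert v S)) < n" using eqB less.prems(3) by simp
      have s1: "insert v S \<subseteq> V" using v less.prems(5) by blast
      have "mwins (V - (D \<union> insert v S)) (FF V E D (insert v S)) (\<not> True)"
        by (rule less.IH[OF c fin gr refl less.prems(4) s1 nd])
      then have "mwins (V - (D \<union> S) - {v}) ((\<lambda>e. e - {v}) ` FF V E D S) False"
        using eqB FF_R2[of v V E D S] by simp
      then have "mwins (V - (D \<union> S)) (FF V E D S) True" using v by (simp add: mwins.mw_mk)
      then show ?thesis using f by simp
    qed
  qed
qed

lemma trans_empty:
  assumes "graph V E"
  shows "dom_wins V E {} {} t \<longleftrightarrow> \<not> mwins V (cnbh V E ` V) (\<not> t)"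
proof -
  have F: "FF V E {} {} = cnbh V E ` V" unfolding FF_def by simp
  have fin: "finite V" using assms unfolding graph_def by simp
  show ?thesis
  proof
    assume "dom_wins V E {} {} t"
    then show "\<not> mwins V (cnbh V E ` V) (\<not> t)" using trans_A[OF _ assms] F by fastforce
  next
    assume "\<not> mwins V (cnbh V E ` V) (\<not> t)"
    then show "dom_wins V E {} {} t" using trans_B_aux[OF fin assms refl, of "{}" "{}" t] F by auto
  qed
qed



definition pa :: "('a \<Rightarrow> 'a \<Rightarrow> bool) \<Rightarrow> 'a set \<Rightarrow> bool" where
  "pa E A \<longleftrightarrow> (\<exists>P. pairing_dominating_set A E P)"

definition pb :: "('a \<Rightarrow> 'a \<Rightarrow> bool) \<Rightarrow> 'a set \<Rightarrow> bool" where
  "pb E A \<longleftrightarrow> (\<exists>x\<in>A. \<exists>P. finite P \<and> (\<forall>(u,v)\<in>P. u \<in> A \<and> v \<in> A \<and> u \<noteq> v \<and> u \<noteq> x \<and> v \<noteq> x) \<and>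
     (\<forall>p\<in>P. \<forall>q\<in>P. p \<noteq> q \<longrightarrow> {fst p, snd p} \<inter> {fst q, snd q} = {}) \<and>
     A \<subseteq> cnbh A E x \<union> (\<Union>(u,v)\<in>P. cnbh A E u \<inter> cnbh A E v))"

lemma cnbh_sub: "u \<in> A \<Longrightarrow> cnbh A E u \<subseteq> A"
  unfolding cnbh_def by auto

lemma cnbh_mono: "A \<subseteq> A' \<Longrightarrow> cnbh A E u \<subseteq> cnbh A' E u"
  unfolding cnbh_def by auto

lemma pds_intro:
  assumes "finite P" "\<forall>(u,v)\<in>P. u \<in> A \<and> v \<in> A \<and> u \<noteq> v"
    "\<forall>p\<in>P. \<forall>q\<in>P. p \<noteq> q \<longrightarrow> {fst p, snd p} \<inter> {fst q, snd q} = {}"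
    "\<And>y. y \<in> A \<Longrightarrow> \<exists>(u,v)\<in>P. y \<in> cnbh A E u \<and> y \<in> cnbh A E v"
  shows "pairing_dominating_set A E P"
  unfolding pairing_dominating_set_def
proof (intro conjI)
  show "A = (\<Union>(u, v)\<in>P. cnbh A E u \<inter> cnbh A E v)"
  proof
    show "A \<subseteq> (\<Union>(u, v)\<in>P. cnbh A E u \<inter> cnbh A E v)" using assms(4) by fastforce
    show "(\<Union>(u, v)\<in>P. cnbh A E u \<inter> cnbh A E v) \<subseteq> A" using assms(2) cnbh_sub by fastforce
  qed
qed (use assms in auto)

lemma pds_cov: "pairing_dominating_set A E P \<Longrightarrow> y \<in> A \<Longrightarrow> \<exists>(u,v)\<in>P. y \<in> cnbh A E u \<and> y \<in> cnbh A E v"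
  unfolding pairing_dominating_set_def by blast

lemma pds_pairs: "pairing_dominating_set A E P \<Longrightarrow> (u,v) \<in> P \<Longrightarrow> u \<in> A \<and> v \<in> A \<and> u \<noteq> v"
  unfolding pairing_dominating_set_def by blast

lemma pds_dj: "pairing_dominating_set A E P \<Longrightarrow> p \<in> P \<Longrightarrow> q \<in> P \<Longrightarrow> p \<noteq> q \<Longrightarrow> {fst p, snd p} \<inter> {fst q, snd q} = {}"
  unfolding pairing_dominating_set_def by blast

lemma pds_fin: "pairing_dominating_set A E P \<Longrightarrow> finite P"
  unfolding pairing_dominating_set_def by blast

lemma pa_pb:
  assumes "A \<noteq> {}" "pa E A"
  shows "pb E A"
proof -
  obtain P where P: "pairing_dominating_set A E P" using assms(2) unfolding pa_def by blast
  obtain y where y: "y \<in> A" using assms(1) by blast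
  from pds_cov[OF P y] obtain u v where uv: "(u,v) \<in> P" by auto
  have uA: "u \<in> A" using pds_pairs[OF P uv] by blast
  let ?P = "P - {(u,v)}"
  have "finite ?P" using pds_fin[OF P] by simp
  moreover have H: "a \<in> A \<and> b \<in> A \<and> a \<noteq> b \<and> a \<noteq> u \<and> b \<noteq> u"
    if ab: "(a,b) \<in> P" "(a,b) \<noteq> (u,v)" for a b
  proof -
    have "{a,b} \<inter> {u,v} = {}" using pds_dj[OF P ab(1) uv ab(2)] by simp
    then show ?thesis using pds_pairs[OF P ab(1)] by blast
  qed
  then have "\<forall>(a,b)\<in>?P. a \<in> A \<and> b \<in> A \<and> a \<noteq> b \<and> a \<noteq> u \<and> b \<noteq> u" by blast
  moreover have "\<forall>p\<in>?P. \<forall>q\<in>?P. p \<noteq> q \<longrightarrow> {fst p, snd p} \<inter> {fst q, snd q} = {}"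
    using pds_dj[OF P] by blast
  moreover have "A \<subseteq> cnbh A E u \<union> (\<Union>(a,b)\<in>?P. cnbh A E a \<inter> cnbh A E b)"
  proof
    fix z assume z: "z \<in> A"
    obtain a b where ab: "(a,b) \<in> P" "z \<in> cnbh A E a" "z \<in> cnbh A E b" using pds_cov[OF P z] by blast
    show "z \<in> cnbh A E u \<union> (\<Union>(a,b)\<in>?P. cnbh A E a \<inter> cnbh A E b)"
    proof (cases "(a,b) = (u,v)")
      case True then show ?thesis using ab by simp
    next
      case False then show ?thesis using ab by blast
    qed
  qed
  ultimately show ?thesis unfolding pb_def using uA by blast
qed



lemma dj_un:
  assumes "\<forall>p\<in>PA. \<forall>q\<in>PA. p \<noteq> q \<longrightarrow> {fst p, snd p} \<inter> {fst q, snd q} = {}"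
    "\<forall>p\<in>PB. \<forall>q\<in>PB. p \<noteq> q \<longrightarrow> {fst p, snd p} \<inter> {fst q, snd q} = {}"
    "\<forall>(u,v)\<in>PA. u \<in> A \<and> v \<in> A" "\<forall>(u,v)\<in>PB. u \<in> B \<and> v \<in> B" "A \<inter> B = {}"
  shows "\<forall>p\<in>PA \<union> PB. \<forall>q\<in>PA \<union> PB. p \<noteq> q \<longrightarrow> {fst p, snd p} \<inter> {fst q, snd q} = {}"
proof (intro ballI impI)
  fix p q assume p: "p \<in> PA \<union> PB" and q: "q \<in> PA \<union> PB" and pq: "p \<noteq> q"
  have a: "fst r \<in> A \<and> snd r \<in> A" if "r \<in> PA" for r using assms(3) that by auto
  have b: "fst r \<in> B \<and> snd r \<in> B" if "r \<in> PB" for r using assms(4) that by auto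
  have c: "{fst p, snd p} \<inter> {fst q, snd q} = {}" if "{fst p, snd p} \<subseteq> A" "{fst q, snd q} \<subseteq> B"
    using that assms(5) by blast
  have d: "{fst p, snd p} \<inter> {fst q, snd q} = {}" if "{fst p, snd p} \<subseteq> B" "{fst q, snd q} \<subseteq> A"
    using that assms(5) by blast
  show "{fst p, snd p} \<inter> {fst q, snd q} = {}"
  proof (cases "p \<in> PA")
    case pA: True
    show ?thesis
    proof (cases "q \<in> PA")
      case True then show ?thesis using assms(1) pA pq by blast
    next
      case False then have "q \<in> PB" using q by blast
      then show ?thesis using c a[OF pA] b by simp
    qed
  next
    case False then have pB: "p \<in> PB" using p by blast
    show ?thesis
    proof (cases "q \<in> PB")
      case True then show ?thesis using assms(2) pB pq by blast
    next
      case False then have "q \<in> PA" using q by blast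
      then show ?thesis using d b[OF pB] a by simp
    qed
  qed
qed

locale uni =
  fixes E :: "'a \<Rightarrow> 'a \<Rightarrow> bool" and A B :: "'a set"
  assumes sym: "\<And>x y. E x y \<Longrightarrow> E y x"
    and dj: "A \<inter> B = {}"
    and noE: "\<And>a b. a \<in> A \<Longrightarrow> b \<in> B \<Longrightarrow> \<not> E a b"
begin

lemma U1: "x \<in> A \<Longrightarrow> cnbh (A \<union> B) E x = cnbh A E x"
  unfolding cnbh_def using noE by auto

lemma U2: "x \<in> B \<Longrightarrow> cnbh (A \<union> B) E x = cnbh B E x"
  unfolding cnbh_def using noE sym by blast

lemma U_pa:
  assumes PA: "pairing_dominating_set A E PA" and PB: "pairing_dominating_set B E PB"
  shows "pairing_dominating_set (A \<union> B) E (PA \<union> PB)"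
proof (rule pds_intro)
  show "finite (PA \<union> PB)" using pds_fin[OF PA] pds_fin[OF PB] by simp
  show "\<forall>(u, v)\<in>PA \<union> PB. u \<in> A \<union> B \<and> v \<in> A \<union> B \<and> u \<noteq> v"
    using pds_pairs[OF PA] pds_pairs[OF PB] by blast
  show "\<forall>p\<in>PA \<union> PB. \<forall>q\<in>PA \<union> PB. p \<noteq> q \<longrightarrow> {fst p, snd p} \<inter> {fst q, snd q} = {}"
  proof (intro ballI impI)
    fix p q assume p: "p \<in> PA \<union> PB" and q: "q \<in> PA \<union> PB" and pq: "p \<noteq> q"
    obtain a b where [simp]: "p = (a,b)" by fastforce
    obtain c d where [simp]: "q = (c,d)" by fastforce
    show "{fst p, snd p} \<inter> {fst q, snd q} = {}"
    proof (cases "p \<in> PA")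
      case pA: True
      show ?thesis
      proof (cases "q \<in> PA")
        case True then show ?thesis using pds_dj[OF PA pA _ pq] by blast
      next
        case False
        then have "q \<in> PB" using q by blast
        then show ?thesis using pds_pairs[OF PA] pds_pairs[OF PB] pA dj by fastforce
      qed
    next
      case pB: False
      then have pB: "p \<in> PB" using p by blast
      show ?thesis
      proof (cases "q \<in> PB")
        case True then show ?thesis using pds_dj[OF PB pB _ pq] by blast
      next
        case False
        then have "q \<in> PA" using q by blast
        then show ?thesis using pds_pairs[OF PA] pds_pairs[OF PB] pB dj by fastforce
      qed
    qed
  qed
  show "\<exists>(u, v)\<in>PA \<union> PB. y \<in> cnbh (A \<union> B) E u \<and> y \<in> cnbh (A \<union> B) E v" if y: "y \<in> A \<union> B" for y
  proof (cases "y \<in> A")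
    case True
    from pds_cov[OF PA True] obtain u v where uv: "(u,v) \<in> PA" "y \<in> cnbh A E u" "y \<in> cnbh A E v" by auto
    then have "u \<in> A" "v \<in> A" using pds_pairs[OF PA] by auto
    then show ?thesis using uv U1 by auto
  next
    case False
    then have yB: "y \<in> B" using y by blast
    from pds_cov[OF PB yB] obtain u v where uv: "(u,v) \<in> PB" "y \<in> cnbh B E u" "y \<in> cnbh B E v" by auto
    then have "u \<in> B" "v \<in> B" using pds_pairs[OF PB] by auto
    then show ?thesis using uv U2 by auto
  qed
qed

lemma swap: "uni E B A"
  using sym dj noE by unfold_locales blast+

lemma U_pb:
  assumes "pb E A" and PB: "pairing_dominating_set B E PB"
  shows "pb E (A \<union> B)"
proof -
  obtain x PA where x: "x \<in> A" and fin: "finite PA"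
    and pr: "\<forall>(u,v)\<in>PA. u \<in> A \<and> v \<in> A \<and> u \<noteq> v \<and> u \<noteq> x \<and> v \<noteq> x"
    and djA: "\<forall>p\<in>PA. \<forall>q\<in>PA. p \<noteq> q \<longrightarrow> {fst p, snd p} \<inter> {fst q, snd q} = {}"
    and cov: "A \<subseteq> cnbh A E x \<union> (\<Union>(u,v)\<in>PA. cnbh A E u \<inter> cnbh A E v)"
    using assms(1) unfolding pb_def by blast
  have "finite (PA \<union> PB)" using fin pds_fin[OF PB] by simp
  moreover have "\<forall>(u,v)\<in>PA \<union> PB. u \<in> A \<union> B \<and> v \<in> A \<union> B \<and> u \<noteq> v \<and> u \<noteq> x \<and> v \<noteq> x"
    using pr pds_pairs[OF PB] x dj by blast
  moreover have "\<forall>p\<in>PA \<union> PB. \<forall>q\<in>PA \<union> PB. p \<noteq> q \<longrightarrow> {fst p, snd p} \<inter> {fst q, snd q} = {}"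
  proof (rule dj_un[OF djA _ _ _ dj])
    show "\<forall>p\<in>PB. \<forall>q\<in>PB. p \<noteq> q \<longrightarrow> {fst p, snd p} \<inter> {fst q, snd q} = {}"
      using pds_dj[OF PB] by blast
    show "\<forall>(u,v)\<in>PA. u \<in> A \<and> v \<in> A" using pr by blast
    show "\<forall>(u,v)\<in>PB. u \<in> B \<and> v \<in> B" using pds_pairs[OF PB] by blast
  qed
  moreover have "A \<union> B \<subseteq> cnbh (A \<union> B) E x \<union> (\<Union>(u,v)\<in>PA \<union> PB. cnbh (A \<union> B) E u \<inter> cnbh (A \<union> B) E v)"
  proof
    fix y assume y: "y \<in> A \<union> B"
    show "y \<in> cnbh (A \<union> B) E x \<union> (\<Union>(u,v)\<in>PA \<union> PB. cnbh (A \<union> B) E u \<inter> cnbh (A \<union> B) E v)"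
    proof (cases "y \<in> A")
      case True
      then have "y \<in> cnbh A E x \<or> (\<exists>(u,v)\<in>PA. y \<in> cnbh A E u \<and> y \<in> cnbh A E v)" using cov by blast
      then show ?thesis
      proof
        assume "y \<in> cnbh A E x" then show ?thesis using U1[OF x] by blast
      next
        assume "\<exists>(u,v)\<in>PA. y \<in> cnbh A E u \<and> y \<in> cnbh A E v"
        then obtain u v where uv: "(u,v) \<in> PA" "y \<in> cnbh A E u" "y \<in> cnbh A E v" by auto
        then have "u \<in> A" "v \<in> A" using pr by auto
        then have "y \<in> cnbh (A \<union> B) E u \<inter> cnbh (A \<union> B) E v" using uv U1 by auto
        then show ?thesis using uv(1) by (auto intro!: bexI[of _ "(u,v)"])
      qed
    next
      case False
      then have yB: "y \<in> B" using y by blast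
      from pds_cov[OF PB yB] obtain u v where uv: "(u,v) \<in> PB" "y \<in> cnbh B E u" "y \<in> cnbh B E v" by auto
      then have "u \<in> B" "v \<in> B" using pds_pairs[OF PB] by auto
      then have "y \<in> cnbh (A \<union> B) E u \<inter> cnbh (A \<union> B) E v" using uv U2 by auto
      then show ?thesis using uv(1) by (auto intro!: bexI[of _ "(u,v)"])
    qed
  qed
  ultimately show ?thesis unfolding pb_def using x by blast
qed

lemma U_lift:
  assumes "finite A" "finite B" "mwins A (cnbh A E ` A) m"
  shows "mwins (A \<union> B) (cnbh (A \<union> B) E ` (A \<union> B)) m"
proof -
  have "\<forall>e\<in>cnbh A E ` A. e \<inter> B = {}"
  proof
    fix e assume "e \<in> cnbh A E ` A"
    then obtain x where x: "x \<in> A" "e = cnbh A E x" by blast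
    then show "e \<inter> B = {}" using cnbh_sub[OF x(1), of E] dj by blast
  qed
  then have "mwins (A \<union> B) (cnbh A E ` A) m"
    by (rule mw_sub[OF assms(1,2) dj _ assms(3)])
  then show ?thesis
  proof (rule mw_mono, intro ballI)
    fix e assume "e \<in> cnbh A E ` A"
    then obtain x where x: "x \<in> A" "e = cnbh A E x" by blast
    then have "cnbh (A \<union> B) E x = e" using U1 by simp
    then show "\<exists>e'\<in>cnbh (A \<union> B) E ` (A \<union> B). e' \<subseteq> e" using x(1) by blast
  qed
qed

lemma U_half:
  assumes "finite A" "finite B" "w \<in> A" "mwins B (cnbh B E ` B) True"
  shows "mwins ((A \<union> B) - {w}) {e \<in> cnbh (A \<union> B) E ` (A \<union> B). w \<notin> e} True"
proof -
  have "mwins (B \<union> (A - {w})) (cnbh B E ` B) True"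
  proof (rule mw_sub[OF assms(2) _ _ _ assms(4)])
    show "finite (A - {w})" using assms(1) by simp
    show "B \<inter> (A - {w}) = {}" using dj by blast
    show "\<forall>e\<in>cnbh B E ` B. e \<inter> (A - {w}) = {}"
    proof
      fix e assume "e \<in> cnbh B E ` B"
      then obtain x where x: "x \<in> B" "e = cnbh B E x" by blast
      then show "e \<inter> (A - {w}) = {}" using cnbh_sub[OF x(1), of E] dj by blast
    qed
  qed
  moreover have "B \<union> (A - {w}) = (A \<union> B) - {w}" using assms(3) dj by blast
  ultimately have "mwins ((A \<union> B) - {w}) (cnbh B E ` B) True" by simp
  then show ?thesis
  proof (rule mw_mono, intro ballI)
    fix e assume "e \<in> cnbh B E ` B"
    then obtain x where x: "x \<in> B" "e = cnbh B E x" by blast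
    have "w \<notin> e" using x cnbh_sub[OF x(1), of E] assms(3) dj by blast
    moreover have "cnbh (A \<union> B) E x = e" using x U2 by simp
    ultimately show "\<exists>e'\<in>{e \<in> cnbh (A \<union> B) E ` (A \<union> B). w \<notin> e}. e' \<subseteq> e"
      using x(1) by blast
  qed
qed

end

lemma U_both:
  assumes "uni E A B" "finite A" "finite B" "A \<union> B \<noteq> {}"
    "mwins A (cnbh A E ` A) True" "mwins B (cnbh B E ` B) True"
  shows "mwins (A \<union> B) (cnbh (A \<union> B) E ` (A \<union> B)) False"
proof (rule mw_br)
  show "A \<union> B \<noteq> {}" by fact
  show "\<forall>v\<in>A \<union> B. mwins (A \<union> B - {v}) {e \<in> cnbh (A \<union> B) E ` (A \<union> B). v \<notin> e} True"
  proof
    fix w assume "w \<in> A \<union> B"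
    then show "mwins (A \<union> B - {w}) {e \<in> cnbh (A \<union> B) E ` (A \<union> B). w \<notin> e} True"
    proof
      assume "w \<in> A" then show ?thesis using uni.U_half[OF assms(1,2,3) _ assms(6)] by blast
    next
      assume "w \<in> B" then show ?thesis using uni.U_half[OF uni.swap[OF assms(1)] assms(3,2) _ assms(5)]
        by (simp add: Un_commute)
    qed
  qed
qed



lemma J_pa2:
  assumes sym: "\<And>x y. E x y \<Longrightarrow> E y x" and dj: "A \<inter> B = {}"
    and allE: "\<And>a b. a \<in> A \<Longrightarrow> b \<in> B \<Longrightarrow> E a b"
    and a: "a1 \<in> A" "a2 \<in> A" "a1 \<noteq> a2" and b: "b1 \<in> B" "b2 \<in> B" "b1 \<noteq> b2"
  shows "pa E (A \<union> B)"
  unfolding pa_def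
proof (rule exI, rule pds_intro)
  show "finite {(a1,a2),(b1,b2)}" by simp
  show "\<forall>(u, v)\<in>{(a1,a2),(b1,b2)}. u \<in> A \<union> B \<and> v \<in> A \<union> B \<and> u \<noteq> v" using a b by auto
  have "{a1,a2} \<inter> {b1,b2} = {}" using a b dj by blast
  then show "\<forall>p\<in>{(a1,a2),(b1,b2)}. \<forall>q\<in>{(a1,a2),(b1,b2)}. p \<noteq> q \<longrightarrow> {fst p, snd p} \<inter> {fst q, snd q} = {}"
    by auto
  show "\<exists>(u, v)\<in>{(a1,a2),(b1,b2)}. y \<in> cnbh (A \<union> B) E u \<and> y \<in> cnbh (A \<union> B) E v"
    if y: "y \<in> A \<union> B" for y
  proof (cases "y \<in> A")
    case True
    then have "E b1 y" "E b2 y" using allE sym b by blast+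
    then have "y \<in> cnbh (A \<union> B) E b1 \<and> y \<in> cnbh (A \<union> B) E b2" using y unfolding cnbh_def by blast
    then show ?thesis by blast
  next
    case False
    then have "y \<in> B" using y by blast
    then have "E a1 y" "E a2 y" using allE a by blast+
    then have "y \<in> cnbh (A \<union> B) E a1 \<and> y \<in> cnbh (A \<union> B) E a2" using y unfolding cnbh_def by blast
    then show ?thesis by blast
  qed
qed

lemma J_single:
  assumes sym: "\<And>x y. E x y \<Longrightarrow> E y x" and c: "c \<notin> B" and allE: "\<And>b. b \<in> B \<Longrightarrow> E c b"
    and "pb E B"
  shows "pa E (insert c B)"
proof -
  obtain x PB where x: "x \<in> B" and fin: "finite PB"
    and pr: "\<forall>(u,v)\<in>PB. u \<in> B \<and> v \<in> B \<and> u \<noteq> v \<and> u \<noteq> x \<and> v \<noteq> x"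
    and djB: "\<forall>p\<in>PB. \<forall>q\<in>PB. p \<noteq> q \<longrightarrow> {fst p, snd p} \<inter> {fst q, snd q} = {}"
    and cov: "B \<subseteq> cnbh B E x \<union> (\<Union>(u,v)\<in>PB. cnbh B E u \<inter> cnbh B E v)"
    using assms(4) unfolding pb_def by blast
  have mono: "cnbh B E z \<subseteq> cnbh (insert c B) E z" for z by (rule cnbh_mono) blast
  have "pairing_dominating_set (insert c B) E (insert (c,x) PB)"
  proof (rule pds_intro)
    show "finite (insert (c, x) PB)" using fin by simp
    show "\<forall>(u, v)\<in>insert (c, x) PB. u \<in> insert c B \<and> v \<in> insert c B \<and> u \<noteq> v"
      using pr x c by auto
    have pq: "{fst p, snd p} \<inter> {c, x} = {}" if "p \<in> PB" for p
    proof -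
      obtain u v where "p = (u,v)" by fastforce
      then show ?thesis using pr that c by auto
    qed
    show "\<forall>p\<in>insert (c, x) PB. \<forall>q\<in>insert (c, x) PB. p \<noteq> q \<longrightarrow> {fst p, snd p} \<inter> {fst q, snd q} = {}"
    proof (intro ballI impI)
      fix p q assume p: "p \<in> insert (c, x) PB" and q: "q \<in> insert (c, x) PB" and ne: "p \<noteq> q"
      show "{fst p, snd p} \<inter> {fst q, snd q} = {}"
      proof (cases "p = (c,x)")
        case True
        then have "q \<in> PB" using q ne by blast
        then show ?thesis using pq[of q] True by auto
      next
        case False
        then have pB: "p \<in> PB" using p by blast
        show ?thesis
        proof (cases "q = (c,x)")
          case True then show ?thesis using pq[OF pB] by auto
        next
          case False then have "q \<in> PB" using q by blast
          then show ?thesis using djB pB ne by blast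
        qed
      qed
    qed
    show "\<exists>(u, v)\<in>insert (c, x) PB. y \<in> cnbh (insert c B) E u \<and> y \<in> cnbh (insert c B) E v"
      if y: "y \<in> insert c B" for y
    proof (cases "y = c")
      case True
      have "E x c" using sym allE x by blast
      then have "y \<in> cnbh (insert c B) E c \<and> y \<in> cnbh (insert c B) E x"
        using True unfolding cnbh_def by blast
      then show ?thesis by blast
    next
      case False
      then have yB: "y \<in> B" using y by blast
      then have "y \<in> cnbh B E x \<or> (\<exists>(u,v)\<in>PB. y \<in> cnbh B E u \<and> y \<in> cnbh B E v)" using cov by blast
      then show ?thesis
      proof
        assume "y \<in> cnbh B E x"
        moreover have "y \<in> cnbh (insert c B) E c" using allE yB unfolding cnbh_def by blast
        ultimately have "y \<in> cnbh (insert c B) E c \<and> y \<in> cnbh (insert c B) E x" using mono by blast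
        then show ?thesis by blast
      next
        assume "\<exists>(u,v)\<in>PB. y \<in> cnbh B E u \<and> y \<in> cnbh B E v"
        then obtain u v where uv: "(u,v) \<in> PB" "y \<in> cnbh B E u" "y \<in> cnbh B E v" by auto
        then have "y \<in> cnbh (insert c B) E u \<and> y \<in> cnbh (insert c B) E v" using mono by blast
        then show ?thesis using uv(1) by (auto intro!: bexI[of _ "(u,v)"])
      qed
    qed
  qed
  then show ?thesis unfolding pa_def by blast
qed

lemma J_lift:
  assumes c: "c \<notin> B" and "mwins B (cnbh B E ` B) False"
  shows "mwins (insert c B) (cnbh (insert c B) E ` insert c B) True"
proof (rule mw_mk)
  show "c \<in> insert c B" by simp
  have eq: "insert c B - {c} = B" using c by simp
  have "mwins B ((\<lambda>e. e - {c}) ` cnbh (insert c B) E ` insert c B) False"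
  proof (rule mw_mono[OF assms(2)], intro ballI)
    fix e assume "e \<in> cnbh B E ` B"
    then obtain x where x: "x \<in> B" "e = cnbh B E x" by blast
    have "cnbh (insert c B) E x - {c} = e" using x c unfolding cnbh_def by auto
    then show "\<exists>e'\<in>(\<lambda>e. e - {c}) ` cnbh (insert c B) E ` insert c B. e' \<subseteq> e" using x(1) by blast
  qed
  then show "mwins (insert c B - {c}) ((\<lambda>e. e - {c}) ` cnbh (insert c B) E ` insert c B) False"
    using eq by simp
qed

lemma J_pb:
  assumes allE: "\<And>b. b \<in> B \<Longrightarrow> E c b"
  shows "pb E (insert c B)"
proof -
  have "insert c B \<subseteq> cnbh (insert c B) E c" using allE unfolding cnbh_def by blast
  then show ?thesis unfolding pb_def by (intro bexI[of _ c] exI[of _ "{}"]) auto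
qed

lemma join_single:
  assumes sym: "\<And>x y. E x y \<Longrightarrow> E y x" and c: "c \<notin> B" and allE: "\<And>b. b \<in> B \<Longrightarrow> E c b"
    and IH: "\<not> pb E B \<longrightarrow> mwins B (cnbh B E ` B) False"
  shows "(\<not> pa E (insert c B) \<longrightarrow> mwins (insert c B) (cnbh (insert c B) E ` insert c B) True) \<and>
         (\<not> pb E (insert c B) \<longrightarrow> mwins (insert c B) (cnbh (insert c B) E ` insert c B) False)"
  using J_pb[of B E c, OF allE] J_single[of E c B, OF sym c allE] J_lift[OF c] IH by blast



lemma two_or_single:
  assumes "A \<noteq> {}" "\<not> (\<exists>a1\<in>A. \<exists>a2\<in>A. a1 \<noteq> a2)"
  shows "\<exists>c. A = {c}"
  using assms by blast

lemma cog_main: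
  assumes "cograph_on E A" "\<And>x y. E x y \<Longrightarrow> E y x"
  shows "finite A \<and> A \<noteq> {} \<and> (\<not> pa E A \<longrightarrow> mwins A (cnbh A E ` A) True) \<and>
         (\<not> pb E A \<longrightarrow> mwins A (cnbh A E ` A) False)"
  using assms(1)
proof (induction rule: cograph_on.induct)
  case (single v)
  have cv: "cnbh {v} E v = {v}" unfolding cnbh_def by auto
  have "mwins {v} (cnbh {v} E ` {v}) True"
  proof (rule mw_mk[of v])
    show "mwins ({v} - {v}) ((\<lambda>e. e - {v}) ` cnbh {v} E ` {v}) False"
      by (rule mw_win) (simp add: cv)
  qed simp
  moreover have "pb E {v}" unfolding pb_def using cv by (intro bexI[of _ v] exI[of _ "{}"]) auto
  ultimately show ?case by simp
next
  case (union A B)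
  have U: "uni E A B" using assms(2) union.hyps(3,4) by unfold_locales blast+
  have U': "uni E B A" by (rule uni.swap[OF U])
  have fA: "finite A" "A \<noteq> {}" and fB: "finite B" "B \<noteq> {}" using union.IH by auto
  have c1: "mwins (A \<union> B) (cnbh (A \<union> B) E ` (A \<union> B)) True" if "\<not> pa E (A \<union> B)"
  proof (cases "pa E A")
    case True
    have "\<not> pa E B"
    proof
      assume "pa E B"
      then show False using that True uni.U_pa[OF U] unfolding pa_def by blast
    qed
    then have "mwins B (cnbh B E ` B) True" using union.IH by blast
    then have "mwins (B \<union> A) (cnbh (B \<union> A) E ` (B \<union> A)) True" using uni.U_lift[OF U' fB(1) fA(1)] by blast
    then show ?thesis by (simp add: Un_commute)
  next
    case False
    then have "mwins A (cnbh A E ` A) True" using union.IH by blast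
    then show ?thesis using uni.U_lift[OF U fA(1) fB(1)] by blast
  qed
  have c2: "mwins (A \<union> B) (cnbh (A \<union> B) E ` (A \<union> B)) False" if npb: "\<not> pb E (A \<union> B)"
  proof (cases "pb E A")
    case pbA: True
    show ?thesis
    proof (cases "pb E B")
      case pbB: True
      have "\<not> pa E B"
      proof
        assume "pa E B"
        then show False using npb pbA uni.U_pb[OF U] unfolding pa_def by blast
      qed
      moreover have "\<not> pa E A"
      proof
        assume "pa E A"
        then have "pb E (B \<union> A)" using pbB uni.U_pb[OF U'] unfolding pa_def by blast
        then show False using npb by (simp add: Un_commute)
      qed
      ultimately have "mwins A (cnbh A E ` A) True" "mwins B (cnbh B E ` B) True" using union.IH by blast+
      then show ?thesis using U_both[OF U fA(1) fB(1)] fA(2) by blast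
    next
      case False
      then have "mwins B (cnbh B E ` B) False" using union.IH by blast
      then have "mwins (B \<union> A) (cnbh (B \<union> A) E ` (B \<union> A)) False" using uni.U_lift[OF U' fB(1) fA(1)] by blast
      then show ?thesis by (simp add: Un_commute)
    qed
  next
    case False
    then have "mwins A (cnbh A E ` A) False" using union.IH by blast
    then show ?thesis using uni.U_lift[OF U fA(1) fB(1)] by blast
  qed
  show ?case using c1 c2 fA fB by blast
next
  case (join A B)
  have fA: "finite A" "A \<noteq> {}" and fB: "finite B" "B \<noteq> {}" using join.IH by auto
  have allE: "\<And>a b. a \<in> A \<Longrightarrow> b \<in> B \<Longrightarrow> E a b" using join.hyps(4) by blast
  have rest: "(\<not> pa E (A \<union> B) \<longrightarrow> mwins (A \<union> B) (cnbh (A \<union> B) E ` (A \<union> B)) True) \<and>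
         (\<not> pb E (A \<union> B) \<longrightarrow> mwins (A \<union> B) (cnbh (A \<union> B) E ` (A \<union> B)) False)"
  proof (cases "(\<exists>a1\<in>A. \<exists>a2\<in>A. a1 \<noteq> a2) \<and> (\<exists>b1\<in>B. \<exists>b2\<in>B. b1 \<noteq> b2)")
    case True
    then obtain a1 a2 b1 b2 where ab: "a1 \<in> A" "a2 \<in> A" "a1 \<noteq> a2" "b1 \<in> B" "b2 \<in> B" "b1 \<noteq> b2" by blast
    have p: "pa E (A \<union> B)" by (rule J_pa2[of E A B, OF assms(2) join.hyps(3) allE ab])
    have "A \<union> B \<noteq> {}" using fA(2) by blast
    then have pb: "pb E (A \<union> B)" by (rule pa_pb[OF _ p])
    show ?thesis using p pb by simp
  next
    case False
    then have "\<not> (\<exists>a1\<in>A. \<exists>a2\<in>A. a1 \<noteq> a2) \<or> \<not> (\<exists>b1\<in>B. \<exists>b2\<in>B. b1 \<noteq> b2)" by blast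
    then show ?thesis
    proof
      assume "\<not> (\<exists>a1\<in>A. \<exists>a2\<in>A. a1 \<noteq> a2)"
      then obtain c where c: "A = {c}" using fA(2) by blast
      have cB: "c \<notin> B" using c join.hyps(3) by blast
      have aE: "\<And>b. b \<in> B \<Longrightarrow> E c b" using allE c by blast
      have "\<not> pb E B \<longrightarrow> mwins B (cnbh B E ` B) False" using join.IH by blast
      then show ?thesis using join_single[of E c B, OF assms(2) cB aE] c by simp
    next
      assume "\<not> (\<exists>b1\<in>B. \<exists>b2\<in>B. b1 \<noteq> b2)"
      then obtain c where c: "B = {c}" using fB(2) by blast
      have cA: "c \<notin> A" using c join.hyps(3) by blast
      have aE: "\<And>a. a \<in> A \<Longrightarrow> E c a" using allE c assms(2) by blast
      have "\<not> pb E A \<longrightarrow> mwins A (cnbh A E ` A) False" using join.IH by blast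
      then show ?thesis using join_single[of E c A, OF assms(2) cA aE] c by (simp add: Un_commute)
    qed
  qed
  show ?case using rest fA fB by blast
qed

theorem theorem6:
  fixes V :: "'a set" and E :: "'a \<Rightarrow> 'a \<Rightarrow> bool"
  assumes "cograph V E"
  shows "outcome_D V E \<longleftrightarrow> (\<exists>P. pairing_dominating_set V E P)"
proof -
  have gr: "graph V E" and cg: "cograph_on E V" using assms unfolding cograph_def by auto
  have sym: "\<And>x y. E x y \<Longrightarrow> E y x" using gr unfolding graph_def by blast
  have fin: "finite V" using gr unfolding graph_def by blast
  show ?thesis
  proof
    assume o: "outcome_D V E"
    show "\<exists>P. pairing_dominating_set V E P"
    proof (rule ccontr)
      assume "\<nexists>P. pairing_dominating_set V E P"
      then have "\<not> pa E V" unfolding pa_def by blast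
      then have "mwins V (cnbh V E ` V) True" using cog_main[OF cg sym] by blast
      then have "\<not> dom_wins V E {} {} False" using trans_empty[OF gr, of False] by simp
      then show False using o unfolding outcome_D_def by blast
    qed
  next
    assume "\<exists>P. pairing_dominating_set V E P"
    then obtain P where P: "pairing_dominating_set V E P" by blast
    let ?Q = "(\<lambda>(u,v). {u,v}) ` P"
    have inv: "pinv V (cnbh V E ` V) ?Q"
    proof (rule pinvI)
      fix p assume "p \<in> ?Q"
      then obtain u v where uv: "(u,v) \<in> P" "p = {u,v}" by auto
      then show "card p = 2" using pds_pairs[OF P uv(1)] by simp
      show "p \<subseteq> V" using pds_pairs[OF P uv(1)] uv by simp
    next
      fix p q assume "p \<in> ?Q" "q \<in> ?Q" "p \<noteq> q"
      then obtain u v u' v' where uv: "(u,v) \<in> P" "p = {u,v}" "(u',v') \<in> P" "q = {u',v'}" by auto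
      then have "(u,v) \<noteq> (u',v')" using \<open>p \<noteq> q\<close> by blast
      then show "p \<inter> q = {}" using pds_dj[OF P uv(1) uv(3)] uv by simp
    next
      fix e assume "e \<in> cnbh V E ` V"
      then obtain x where x: "x \<in> V" "e = cnbh V E x" by blast
      from pds_cov[OF P x(1)] obtain u v where uv: "(u,v) \<in> P" "x \<in> cnbh V E u" "x \<in> cnbh V E v" by auto
      have "u \<in> V" "v \<in> V" using pds_pairs[OF P uv(1)] by auto
      then have "{u,v} \<subseteq> e" using uv(2,3) x sym unfolding cnbh_def by blast
      then show "\<exists>p\<in>?Q. p \<subseteq> e" using uv(1) by blast
    qed
    have "\<not> mwins V (cnbh V E ` V) m" for m by (rule pairing_breaker[OF fin inv])
    then show "outcome_D V E" unfolding outcome_D_def using trans_empty[OF gr] by simp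
  qed
qed


end
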